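(* For all $0\le t<1$ and $x\in\mathbb{R}$, $W^*(t,x)\ge h(t,x)$, where $$W^*(t,x)=\begin{cases}(1-t)^{q/2}G_q(|x|/\sqrt{1-t})\,w(A^* ), & |x|>A^*\sqrt{1-t},\\ h(t,x), & |x|\le A^*\sqrt{1-t}.\end{cases}$$
   Context: $q>0$. $F_q(y):=\int_0^\infty u^{q-1}e^{yu-u^2/2}\,\mathrm{d}u$ and $G_q(y):=F_q(-y)$. $D^*>0$ is the unique positive root of $q-D(F_q+G_q)'(D)/(F_q+G_q)(D)=0$. $\overline{U}(t,x)=(1-t)^{q/2}(D^* )^q(F_q+G_q)(x/\sqrt{1-t})/(F_q+G_q)(D^* )$ if $|x|<D^*\sqrt{1-t}$, and $|x|^q$ otherwise. $h(t,x)=\overline{U}(t,x)-|x|^q$ if $|x|<D^*\sqrt{1-t}$, and $0$ otherwise. $w(A):=\frac{1}{G_q(A)}[(D^* )^q(F_q+G_q)(A)/(F_q+G_q)(D^* )-A^q]$ for $0\le A\le D^*$. $A^*$ is the unique maximizer of $w$ over $[0,D^*]$. *)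

theory Defs
  imports "HOL-Analysis.Analysis"
begin

definition Fq :: "real \<Rightarrow> real \<Rightarrow> real" where
  "Fq q y = (LINT u:{0<..}|lborel. u powr (q - 1) * exp (y * u - u\<^sup>2 / 2))"

definition Gq :: "real \<Rightarrow> real \<Rightarrow> real" where
  "Gq q y = Fq q (- y)"

definition FGq :: "real \<Rightarrow> real \<Rightarrow> real" where
  "FGq q y = Fq q y + Gq q y"

definition Dstar :: "real \<Rightarrow> real" where
  "Dstar q = (THE D. D > 0 \<and> q - D * deriv (FGq q) D / FGq q D = 0)"

definition Ubar :: "real \<Rightarrow> real \<Rightarrow> real \<Rightarrow> real" where
  "Ubar q t x = (if \<bar>x\<bar> < Dstar q * sqrt (1 - t)
     then (1 - t) powr (q / 2) * (Dstar q) powr q * FGq q (x / sqrt (1 - t)) / FGq q (Dstar q)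
     else \<bar>x\<bar> powr q)"

definition hfun :: "real \<Rightarrow> real \<Rightarrow> real \<Rightarrow> real" where
  "hfun q t x = (if \<bar>x\<bar> < Dstar q * sqrt (1 - t) then Ubar q t x - \<bar>x\<bar> powr q else 0)"

definition wfun :: "real \<Rightarrow> real \<Rightarrow> real" where
  "wfun q A = (1 / Gq q A) * ((Dstar q) powr q * FGq q A / FGq q (Dstar q) - A powr q)"

definition Astar :: "real \<Rightarrow> real" where
  "Astar q = (THE A. A \<in> {0..Dstar q} \<and> (\<forall>B\<in>{0..Dstar q}. wfun q B \<le> wfun q A))"

definition Wstar :: "real \<Rightarrow> real \<Rightarrow> real \<Rightarrow> real" where
  "Wstar q t x = (if \<bar>x\<bar> > Astar q * sqrt (1 - t)
     then (1 - t) powr (q / 2) * Gq q (\<bar>x\<bar> / sqrt (1 - t)) * wfun q (Astar q)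
     else hfun q t x)"

end

theory Submission
  imports Defs "HOL-Real_Asymp.Real_Asymp"
begin

lemma gamma_int:
  fixes p :: real assumes "p > 0"
  shows "set_integrable lborel {0<..} (\<lambda>u. u powr (p-1) / exp u)"
proof -
  have eq: "\<And>t. ennreal (indicator {0<..} t * t powr (p - 1) / exp t) = ennreal (indicator {0..} t * t powr (p - 1) / exp t)"
    by (auto simp: indicator_def)
  have "(\<integral>\<^sup>+ t. ennreal (indicator {0<..} t * t powr (p - 1) / exp t) \<partial>lborel) = ennreal (Gamma p)"
    using Gamma_conv_nn_integral_real[OF assms] by (simp add: eq)
  then show ?thesis unfolding set_integrable_def
    apply (intro integrableI_bounded)
     apply measurable
    done
qed

lemma int_gen:
  fixes p c :: real assumes "p > 0"
  shows "set_integrable lborel {0<..} (\<lambda>u. u powr (p-1) * exp (c*u - u\<^sup>2/2))"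
proof (rule set_integrable_bound)
  show "set_integrable lborel {0<..} (\<lambda>u. exp ((c+1)\<^sup>2/2) * (u powr (p-1) / exp u))"
    by (rule set_integrable_mult_right) (use gamma_int[OF assms] in auto)
  show "set_borel_measurable lborel {0<..} (\<lambda>u. u powr (p-1) * exp (c*u - u\<^sup>2/2))"
    unfolding set_borel_measurable_def by measurable
  show "AE x in lborel. x \<in> {0<..} \<longrightarrow> norm (x powr (p-1) * exp (c*x - x\<^sup>2/2)) \<le> norm (exp ((c+1)\<^sup>2/2) * (x powr (p-1) / exp x))"
  proof (rule AE_I2, rule impI)
    fix x :: real assume "x \<in> {0<..}"
    have "c*x - x\<^sup>2/2 \<le> (c+1)\<^sup>2/2 + (- x)"
      using sum_squares_ge_zero[of "(c+1) - x" 0] by (simp add: power2_eq_square algebra_simps)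
    then have "exp (c*x - x\<^sup>2/2) \<le> exp ((c+1)\<^sup>2/2) / exp x"
      by (simp add: exp_add[symmetric] exp_minus field_simps exp_diff)
    then have "x powr (p-1) * exp (c*x - x\<^sup>2/2) \<le> x powr (p-1) * (exp ((c+1)\<^sup>2/2) / exp x)"
      by (intro mult_left_mono) auto
    then show "norm (x powr (p-1) * exp (c*x - x\<^sup>2/2)) \<le> norm (exp ((c+1)\<^sup>2/2) * (x powr (p-1) / exp x))"
      by (simp add: mult_ac)
  qed
qed

lemma Fq_pos:
  fixes p y :: real assumes "p > 0"
  shows "Fq p y > 0"
proof -
  let ?f = "\<lambda>u. indicator {0<..} u * (u powr (p-1) * exp (y*u - u\<^sup>2/2))"
  have int: "integrable lborel ?f" using int_gen[OF assms, of y] by (simp add: set_integrable_def)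
  have nn: "AE x in lborel. 0 \<le> ?f x" by (auto simp: indicator_def)
  have ge: "integral\<^sup>L lborel ?f \<ge> 0" by (rule integral_nonneg_AE[OF nn])
  have ne: "integral\<^sup>L lborel ?f \<noteq> 0"
  proof
    assume "integral\<^sup>L lborel ?f = 0"
    then have "AE x in lborel. ?f x = 0" using integral_nonneg_eq_0_iff_AE[OF int nn] by simp
    then have "AE x in lborel. x \<notin> {0<..<1::real}"
      by (rule AE_mp) (auto simp: indicator_def)
    then have "emeasure lborel {x::real. \<not> x \<notin> {0<..<1}} = 0"
      by (subst (asm) AE_iff_measurable[OF _ refl]) auto
    moreover have "{x::real. \<not> x \<notin> {0<..<1}} = {0<..<1}" by auto
    moreover have "emeasure lborel {0<..<1::real} = 1" by simp
    ultimately show False by simp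
  qed
  have "Fq p y = integral\<^sup>L lborel ?f" unfolding Fq_def set_lebesgue_integral_def by simp
  then show ?thesis using ge ne by linarith
qed

lemma exp_taylor2: "\<bar>exp x - 1 - x\<bar> \<le> x\<^sup>2 * exp \<bar>x\<bar>" for x :: real
proof -
  obtain t where t: "\<bar>t\<bar> \<le> \<bar>x\<bar>" "exp x = (\<Sum>m<2. (x ^ m) / fact m) + (exp t / fact 2) * x ^ 2"
    using Maclaurin_exp_le[of x 2] by blast
  have s: "(\<Sum>m<2. (x ^ m) / fact m) = 1 + x" by (simp add: lessThan_nat_numeral)
  have e: "exp x - 1 - x = exp t / 2 * x\<^sup>2" using t(2) s by simp
  have le: "exp t \<le> exp \<bar>x\<bar>" using t(1) by simp
  have l2: "exp t / 2 * x\<^sup>2 \<le> x\<^sup>2 * exp \<bar>x\<bar>"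
  proof -
    have "exp t / 2 \<le> exp \<bar>x\<bar>" using le exp_gt_zero[of t] by linarith
    then have "exp t / 2 * x\<^sup>2 \<le> exp \<bar>x\<bar> * x\<^sup>2" by (rule mult_right_mono) simp
    then show ?thesis by (simp only: mult.commute)
  qed
  have "0 \<le> exp t / 2 * x\<^sup>2" by simp
  then have "\<bar>exp x - 1 - x\<bar> = exp t / 2 * x\<^sup>2" using e by (simp only: abs_of_nonneg)
  then show ?thesis using l2 by (simp only:)
qed

lemma quot_bound:
  fixes h u :: real assumes "h \<noteq> 0" "\<bar>h\<bar> \<le> 1" "u > 0"
  shows "\<bar>(exp (h*u) - 1)/h - u\<bar> \<le> \<bar>h\<bar> * (u\<^sup>2 * exp u)"
proof -
  have "(exp (h*u) - 1)/h - u = (exp (h*u) - 1 - h*u)/h" using assms(1) by (simp add: diff_divide_distrib)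
  then have "\<bar>(exp (h*u) - 1)/h - u\<bar> = \<bar>exp (h*u) - 1 - h*u\<bar> / \<bar>h\<bar>" by (simp add: abs_divide)
  also have "\<dots> \<le> ((h*u)\<^sup>2 * exp \<bar>h*u\<bar>) / \<bar>h\<bar>"
    by (intro divide_right_mono exp_taylor2) simp
  also have "\<dots> = \<bar>h\<bar> * (u\<^sup>2 * exp \<bar>h*u\<bar>)"
  proof -
    have "(h*u)\<^sup>2 = \<bar>h\<bar> * (\<bar>h\<bar> * u\<^sup>2)" by (simp add: power2_eq_square abs_mult_self_eq mult_ac)
    then show ?thesis using assms(1) by simp
  qed
  also have "\<dots> \<le> \<bar>h\<bar> * (u\<^sup>2 * exp u)"
  proof -
    have "\<bar>h*u\<bar> \<le> u" using assms by (simp add: abs_mult mult_left_le_one_le)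
    then show ?thesis by (intro mult_left_mono) auto
  qed
  finally show ?thesis .
qed

lemma Fq_deriv:
  fixes p y :: real assumes p: "p > 0"
  shows "(Fq p has_real_derivative Fq (p+1) y) (at y)"
proof -
  define g where "g u = u powr (p-1) * exp (y*u - u\<^sup>2/2)" for u :: real
  define B where "B u = u powr ((p+2)-1) * exp ((y+1)*u - u\<^sup>2/2)" for u :: real
  define C where "C = (LINT u:{0<..}|lborel. B u)"
  have intB: "set_integrable lborel {0<..} B" unfolding B_def using int_gen[of "p+2" "y+1"] p by simp
  have key: "\<bar>(Fq p (y + h) - Fq p y) / h - Fq (p+1) y\<bar> \<le> \<bar>h\<bar> * C"
    if h: "h \<noteq> 0" "\<bar>h\<bar> \<le> 1" for h
  proof -
    have i1: "set_integrable lborel {0<..} (\<lambda>u. u powr (p-1) * exp ((y+h)*u - u\<^sup>2/2))"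
      using int_gen p by simp
    have i0: "set_integrable lborel {0<..} g" unfolding g_def using int_gen p by simp
    have i2: "set_integrable lborel {0<..} (\<lambda>u. u powr ((p+1)-1) * exp (y*u - u\<^sup>2/2))"
      using int_gen[of "p+1" y] p by simp
    define D where "D u = (u powr (p-1) * exp ((y+h)*u - u\<^sup>2/2) - g u) / h - u powr ((p+1)-1) * exp (y*u - u\<^sup>2/2)" for u
    have iD: "set_integrable lborel {0<..} D" unfolding D_def
      by (intro set_integral_diff set_integrable_divide i1 i0 i2)
    have eqD: "(Fq p (y + h) - Fq p y) / h - Fq (p+1) y = (LINT u:{0<..}|lborel. D u)"
    proof -
      have a: "set_integrable lborel {0<..} (\<lambda>u. u powr (p-1) * exp ((y+h)*u - u\<^sup>2/2) - g u)"
        using i1 i0 by (rule set_integral_diff(1))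
      have "(LINT u:{0<..}|lborel. D u) = (LINT u:{0<..}|lborel. (u powr (p-1) * exp ((y+h)*u - u\<^sup>2/2) - g u) / h)
          - (LINT u:{0<..}|lborel. u powr ((p+1)-1) * exp (y*u - u\<^sup>2/2))"
        unfolding D_def by (rule set_integral_diff(2)[OF set_integrable_divide[OF a] i2])
      also have "(LINT u:{0<..}|lborel. (u powr (p-1) * exp ((y+h)*u - u\<^sup>2/2) - g u) / h)
          = (LINT u:{0<..}|lborel. (u powr (p-1) * exp ((y+h)*u - u\<^sup>2/2) - g u)) / h"
        by (rule set_integral_divide_zero)
      also have "(LINT u:{0<..}|lborel. (u powr (p-1) * exp ((y+h)*u - u\<^sup>2/2) - g u))
          = Fq p (y+h) - Fq p y"
        unfolding Fq_def g_def by (rule set_integral_diff(2)[OF i1 i0[unfolded g_def]])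
      finally show ?thesis unfolding Fq_def by simp
    qed
    have bnd: "\<bar>D u\<bar> \<le> \<bar>h\<bar> * B u" if "u > 0" for u
    proof -
      have "D u = g u * ((exp (h*u) - 1)/h - u)"
      proof -
        define P where "P = u powr (p-1)"
        define E where "E = exp (y*u - u\<^sup>2/2)"
        have 1: "u powr ((p+1)-1) = P * u"
        proof -
          have "u powr ((p+1)-1) = u powr ((p-1) + 1)" by simp
          also have "\<dots> = P * u powr 1" unfolding P_def by (rule powr_add)
          finally show ?thesis using that by simp
        qed
        have 2: "exp ((y+h)*u - u\<^sup>2/2) = E * exp (h*u)" unfolding E_def
          by (simp add: exp_add[symmetric] algebra_simps)
        have "D u = (P * (E * exp (h*u)) - P * E) / h - P * u * E"
          unfolding D_def g_def 1 2 P_def[symmetric] E_def[symmetric] ..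
        also have "\<dots> = P * E * ((exp (h*u) - 1)/h - u)"
          by (simp add: algebra_simps diff_divide_distrib)
        finally show ?thesis unfolding g_def P_def E_def .
      qed
      also have "\<bar>\<dots>\<bar> = g u * \<bar>(exp (h*u) - 1)/h - u\<bar>" unfolding g_def by (simp add: abs_mult)
      also have "\<dots> \<le> g u * (\<bar>h\<bar> * (u\<^sup>2 * exp u))"
        by (intro mult_left_mono quot_bound h that) (simp add: g_def)
      also have "\<dots> = \<bar>h\<bar> * B u" 
      proof -
        have 1: "u powr ((p+2)-1) = u powr (p-1) * u\<^sup>2"
        proof -
          have "u powr ((p+2)-1) = u powr ((p-1) + 2)" by simp
          also have "\<dots> = u powr (p-1) * u powr 2" by (rule powr_add)
          finally show ?thesis using that by (simp add: powr_numeral)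
        qed
        have 2: "exp ((y+1)*u - u\<^sup>2/2) = exp (y*u - u\<^sup>2/2) * exp u"
          by (simp add: exp_add[symmetric] algebra_simps)
        show ?thesis unfolding g_def B_def 1 2 by (simp only: mult_ac)
      qed
      finally show ?thesis .
    qed
    have "\<bar>LINT u:{0<..}|lborel. D u\<bar> \<le> (LINT u:{0<..}|lborel. \<bar>h\<bar> * B u)"
      unfolding set_lebesgue_integral_def
    proof (rule integral_abs_bound_integral)
      show "integrable lborel (\<lambda>x. indicator {0<..} x *\<^sub>R D x)" using iD by (simp add: set_integrable_def)
      show "integrable lborel (\<lambda>x. indicator {0<..} x *\<^sub>R (\<bar>h\<bar> * B x))"
        using set_integrable_mult_right[of "\<bar>h\<bar>", OF intB] by (simp add: set_integrable_def)
      show "\<And>x. \<bar>indicator {0<..} x *\<^sub>R D x\<bar> \<le> indicator {0<..} x *\<^sub>R (\<bar>h\<bar> * B x)"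
        using bnd by (auto simp: indicator_def)
    qed
    also have "\<dots> = \<bar>h\<bar> * C" unfolding C_def by simp
    finally show ?thesis using eqD by simp
  qed
  have "((\<lambda>h. (Fq p (y + h) - Fq p y) / h - Fq (p+1) y) \<longlongrightarrow> 0) (at 0)"
  proof (rule Lim_null_comparison)
    have "eventually (\<lambda>h::real. h \<noteq> 0 \<and> \<bar>h\<bar> \<le> 1) (at 0)"
      unfolding eventually_at by (rule exI[of _ 1]) auto
    then show "eventually (\<lambda>h. norm ((Fq p (y + h) - Fq p y) / h - Fq (p+1) y) \<le> \<bar>h\<bar> * C) (at 0)"
      by eventually_elim (use key in auto)
    show "((\<lambda>h. \<bar>h\<bar> * C) \<longlongrightarrow> 0) (at (0::real))"
      by (intro tendsto_mult_left_zero tendsto_rabs_zero tendsto_ident_at)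
  qed
  then show ?thesis unfolding DERIV_def by (simp add: LIM_zero_iff)
qed

lemma Fq_ode:
  fixes p y :: real assumes p: "p > 0"
  shows "Fq (p+2) y = y * Fq (p+1) y + p * Fq p y"
proof -
  define E where "E u = exp (y*u - u\<^sup>2/2)" for u :: real
  define f where "f u = p * (u powr (p-1) * E u) + y * (u powr ((p+1)-1) * E u) - u powr ((p+2)-1) * E u" for u
  define F where "F u = u powr p * E u" for u
  have i0: "set_integrable lborel {0<..} (\<lambda>u. u powr (p-1) * E u)" unfolding E_def using int_gen p by simp
  have i1: "set_integrable lborel {0<..} (\<lambda>u. u powr ((p+1)-1) * E u)" unfolding E_def using int_gen[of "p+1" y] p by simp
  have i2: "set_integrable lborel {0<..} (\<lambda>u. u powr ((p+2)-1) * E u)" unfolding E_def using int_gen[of "p+2" y] p by simp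
  have intf: "set_integrable lborel {0<..} f" unfolding f_def
    by (intro set_integral_diff(1) set_integral_add(1) set_integrable_mult_right i0 i1 i2)
  have lin: "(LINT u:{0<..}|lborel. f u) = p * Fq p y + y * Fq (p+1) y - Fq (p+2) y"
  proof -
    have "(LINT u:{0<..}|lborel. f u) = (LINT u:{0<..}|lborel. p * (u powr (p-1) * E u) + y * (u powr ((p+1)-1) * E u))
          - (LINT u:{0<..}|lborel. u powr ((p+2)-1) * E u)"
      unfolding f_def by (intro set_integral_diff(2) set_integral_add(1) set_integrable_mult_right i0 i1 i2)
    also have "(LINT u:{0<..}|lborel. p * (u powr (p-1) * E u) + y * (u powr ((p+1)-1) * E u))
       = (LINT u:{0<..}|lborel. p * (u powr (p-1) * E u)) + (LINT u:{0<..}|lborel. y * (u powr ((p+1)-1) * E u))"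
      by (intro set_integral_add(2) set_integrable_mult_right i0 i1)
    finally show ?thesis unfolding Fq_def E_def by simp
  qed
  have deriv: "(F has_real_derivative f x) (at x)" if "x > 0" for x
  proof -
    have 1: "x powr ((p+1)-1) = x powr p" by simp
    have 2: "x powr ((p+2)-1) = x powr p * x"
    proof -
      have "x powr ((p+2)-1) = x powr (p + 1)" by (simp add: add.commute)
      also have "\<dots> = x powr p * x powr 1" by (rule powr_add)
      finally show ?thesis using that by simp
    qed
    have "(F has_real_derivative (p * x powr (p-1) * E x + x powr p * (E x * (y - x)))) (at x)"
      unfolding F_def E_def using that
      by (auto intro!: derivative_eq_intros simp: power2_eq_square field_simps)
    moreover have "p * x powr (p-1) * E x + x powr p * (E x * (y - x)) = f x"
      unfolding f_def 1 2 by (simp add: algebra_simps)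
    ultimately show ?thesis by simp
  qed
  have ei: "einterval (ereal 0) \<infinity> = {0<..}" by (auto simp: einterval_def)
  have "(LBINT x=ereal 0..\<infinity>. f x) = 0 - 0"
  proof (rule interval_integral_FTC_integrable[where F=F])
    show "ereal 0 < \<infinity>" by simp
    show "(F has_vector_derivative f x) (at x)" if "ereal 0 < ereal x" "ereal x < \<infinity>" for x
      using deriv[of x] that by (simp add: has_real_derivative_iff_has_vector_derivative)
    show "isCont f x" if "ereal 0 < ereal x" "ereal x < \<infinity>" for x
      using that unfolding f_def E_def by (auto intro!: continuous_intros)
    show "set_integrable lborel (einterval (ereal 0) \<infinity>) f"
      using intf by (simp add: ei)
    show "((F \<circ> real_of_ereal) \<longlongrightarrow> 0) (at_right (ereal 0))"
      unfolding ereal_tendsto_simps F_def E_def using p by real_asymp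
    show "((F \<circ> real_of_ereal) \<longlongrightarrow> 0) (at_left \<infinity>)"
      unfolding ereal_tendsto_simps F_def E_def by real_asymp
  qed
  moreover have "(LBINT x=ereal 0..\<infinity>. f x) = (LINT u:{0<..}|lborel. f u)"
    by (simp add: interval_lebesgue_integral_def ei)
  ultimately show ?thesis using lin by simp
qed

definition H1 :: "real \<Rightarrow> real \<Rightarrow> real" where
  "H1 q y = Fq (q+1) y - Fq (q+1) (-y)"
definition G1 :: "real \<Rightarrow> real \<Rightarrow> real" where
  "G1 q y = - Fq (q+1) (-y)"

lemma G_pos: "q > 0 \<Longrightarrow> Gq q y > 0"
  unfolding Gq_def using Fq_pos by simp

lemma H_pos: "q > 0 \<Longrightarrow> FGq q y > 0"
  unfolding FGq_def using Fq_pos G_pos by (simp add: add_pos_pos)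

lemma H_even: "FGq q (-y) = FGq q y"
  unfolding FGq_def Gq_def by simp

lemma H1_zero: "H1 q 0 = 0" unfolding H1_def by simp

lemma dF_neg:
  assumes "p > 0"
  shows "((\<lambda>y. Fq p (-y)) has_real_derivative - Fq (p+1) (-y)) (at y)"
  using DERIV_chain2[OF Fq_deriv[OF assms, of "-y"] DERIV_minus[OF DERIV_ident]] by simp

lemma dH:
  assumes "q > 0"
  shows "(FGq q has_real_derivative H1 q y) (at y)"
proof -
  have "((\<lambda>y. Fq q y + Fq q (-y)) has_real_derivative Fq (q+1) y + - Fq (q+1) (-y)) (at y)"
    by (intro DERIV_add Fq_deriv dF_neg assms)
  then show ?thesis unfolding FGq_def Gq_def H1_def by simp
qed

lemma dG:
  assumes "q > 0"
  shows "(Gq q has_real_derivative G1 q y) (at y)"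
  unfolding Gq_def G1_def using dF_neg[OF assms] by simp

lemma dH1:
  assumes "q > 0"
  shows "(H1 q has_real_derivative (y * H1 q y + q * FGq q y)) (at y)"
proof -
  have q1: "q + 1 > 0" using assms by simp
  have "((\<lambda>y. Fq (q+1) y - Fq (q+1) (-y)) has_real_derivative Fq (q+1+1) y - - Fq (q+1+1) (-y)) (at y)"
    by (intro DERIV_diff Fq_deriv dF_neg q1)
  moreover have "Fq (q+1+1) y - - Fq (q+1+1) (-y) = y * H1 q y + q * FGq q y"
    using Fq_ode[OF assms, of y] Fq_ode[OF assms, of "-y"]
    unfolding H1_def FGq_def Gq_def by (simp add: algebra_simps)
  ultimately show ?thesis unfolding H1_def by simp
qed

lemma dG1:
  assumes "q > 0"
  shows "(G1 q has_real_derivative (y * G1 q y + q * Gq q y)) (at y)"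
proof -
  have q1: "q + 1 > 0" using assms by simp
  have "((\<lambda>y. - Fq (q+1) (-y)) has_real_derivative - (- Fq (q+1+1) (-y))) (at y)"
    by (intro DERIV_minus dF_neg q1)
  moreover have "- (- Fq (q+1+1) (-y)) = y * G1 q y + q * Gq q y"
    using Fq_ode[OF assms, of "-y"]
    unfolding G1_def Gq_def by (simp add: algebra_simps)
  ultimately show ?thesis unfolding G1_def by simp
qed

lemma F1_mono:
  assumes "q > 0" "a < b"
  shows "Fq (q+1) a < Fq (q+1) b"
proof (rule DERIV_pos_imp_increasing[OF assms(2)])
  fix x show "\<exists>y. DERIV (Fq (q+1)) x :> y \<and> y > 0"
    using Fq_deriv[of "q+1" x] Fq_pos[of "q+1+1" x] assms(1) by auto
qed

lemma H1_pos: "q > 0 \<Longrightarrow> y > 0 \<Longrightarrow> H1 q y > 0"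
  unfolding H1_def using F1_mono[of q "-y" y] by simp

definition rr :: "real \<Rightarrow> real \<Rightarrow> real" where
  "rr q y = H1 q y / FGq q y"

lemma dr:
  assumes q: "q > 0"
  shows "(rr q has_real_derivative (q + y * rr q y - (rr q y)\<^sup>2)) (at y)"
proof -
  have Hn: "FGq q y \<noteq> 0" using H_pos[OF q] by (simp add: less_imp_neq[symmetric])
  have "((\<lambda>y. H1 q y / FGq q y) has_real_derivative
     ((y * H1 q y + q * FGq q y) * FGq q y - H1 q y * H1 q y) / (FGq q y * FGq q y)) (at y)"
    by (rule DERIV_divide[OF dH1[OF q] dH[OF q] Hn])
  moreover have "((y * H1 q y + q * FGq q y) * FGq q y - H1 q y * H1 q y) / (FGq q y * FGq q y)
      = q + y * rr q y - (rr q y)\<^sup>2"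
    using Hn unfolding rr_def by (simp add: field_simps power2_eq_square)
  ultimately show ?thesis unfolding rr_def[abs_def] by simp
qed

definition PP :: "real \<Rightarrow> real \<Rightarrow> real" where
  "PP q y = exp (-(y*y)/2) * (q * (FGq q y * FGq q y) + y * FGq q y * H1 q y - H1 q y * H1 q y)"

lemma dPP:
  assumes q: "q > 0"
  shows "(PP q has_real_derivative exp (-(y*y)/2) * (FGq q y * H1 q y)) (at y)"
proof -
  note d1 = dH[OF q, of y] and d2 = dH1[OF q, of y]
  have e: "((\<lambda>y. exp (-(y*y)/2)) has_real_derivative exp (-(y*y)/2) * (-y)) (at y)"
    by (auto intro!: derivative_eq_intros simp: field_simps)
  note D0 = DERIV_diff[OF DERIV_add[OF DERIV_cmult[OF DERIV_mult'[OF d1 d1]] DERIV_mult'[OF DERIV_mult'[OF DERIV_ident d1] d2]] DERIV_mult'[OF d2 d2]]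
  from DERIV_mult'[OF e D0] show ?thesis unfolding PP_def[abs_def]
    by (rule DERIV_cong) algebra
qed

lemma Q_pos:
  assumes q: "q > 0" and y: "y \<ge> 0"
  shows "q + y * rr q y - (rr q y)\<^sup>2 > 0"
proof -
  have "PP q 0 \<le> PP q y"
  proof (rule DERIV_nonneg_imp_nondecreasing[OF y])
    fix x assume "0 \<le> x" "x \<le> y"
    then have "H1 q x \<ge> 0" using H1_pos[OF q, of x] H1_zero[of q] by (cases "x = 0") auto
    then show "\<exists>d. DERIV (PP q) x :> d \<and> 0 \<le> d"
      using dPP[OF q, of x] H_pos[OF q, of x] by (intro exI[of _ "exp (-(x*x)/2) * (FGq q x * H1 q x)"]) simp
  qed
  moreover have "PP q 0 > 0" unfolding PP_def using H_pos[OF q, of 0] q H1_zero[of q] by simp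
  ultimately have P: "PP q y > 0" by simp
  have Hp: "FGq q y > 0" using H_pos[OF q] .
  have "PP q y = exp (-(y*y)/2) * (FGq q y * FGq q y) * (q + y * rr q y - (rr q y)\<^sup>2)"
  proof -
    have "(q + y * rr q y - (rr q y)\<^sup>2) * (FGq q y * FGq q y) = q * (FGq q y * FGq q y) + y * FGq q y * H1 q y - H1 q y * H1 q y"
      unfolding rr_def using Hp by (simp add: power2_eq_square algebra_simps)
    then show ?thesis unfolding PP_def by (metis mult.assoc mult.commute)
  qed
  moreover have "exp (-(y*y)/2) * (FGq q y * FGq q y) > 0" using Hp by simp
  ultimately show ?thesis using P zero_less_mult_pos by metis
qed

lemma rr_zero: "rr q 0 = 0" unfolding rr_def H1_zero by simp

lemma rr_mono:
  assumes q: "q > 0" and "0 \<le> a" "a < b"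
  shows "rr q a < rr q b"
proof (rule DERIV_pos_imp_increasing[OF assms(3)])
  fix x assume "a \<le> x" "x \<le> b"
  then show "\<exists>d. DERIV (rr q) x :> d \<and> 0 < d"
    using dr[OF q, of x] Q_pos[OF q, of x] assms(2) by auto
qed

lemma gg_mono:
  assumes q: "q > 0" and "0 \<le> a" "a < b"
  shows "a * rr q a < b * rr q b"
proof -
  have "rr q a < rr q b" by (rule rr_mono[OF assms])
  moreover have "rr q b > 0" using rr_mono[OF q, of 0 b] assms rr_zero[of q] by simp
  moreover have "rr q a \<ge> 0" using rr_mono[OF q, of 0 a] assms rr_zero[of q] by (cases "a = 0") auto
  ultimately have "a * rr q a \<le> a * rr q b" using assms by (intro mult_left_mono) auto
  also have "\<dots> < b * rr q b" using \<open>rr q b > 0\<close> assms by (intro mult_strict_right_mono) auto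
  finally show ?thesis .
qed

lemma rr_cont: "q > 0 \<Longrightarrow> continuous_on S (\<lambda>D. D * rr q D)"
proof -
  assume q: "q > 0"
  have "continuous_on S (rr q)"
    by (rule continuous_at_imp_continuous_on) (use DERIV_isCont[OF dr[OF q]] in blast)
  then show ?thesis by (intro continuous_on_mult continuous_on_id)
qed

lemma root_exists:
  assumes q: "q > 0"
  shows "\<exists>D. D > 0 \<and> D * rr q D = q"
proof -
  have r1: "rr q 1 > 0" using rr_mono[OF q, of 0 1] rr_zero[of q] by simp
  define b where "b = 1 + q / rr q 1"
  have b1: "b \<ge> 1" unfolding b_def using q r1 by simp
  have rb: "rr q 1 \<le> rr q b"
  proof (cases "b = 1")
    case False then show ?thesis using rr_mono[OF q, of 1 b] b1 by simp
  qed simp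
  have "b * rr q 1 \<le> b * rr q b" by (rule mult_left_mono[OF rb]) (use b1 in simp)
  moreover have "b * rr q 1 = rr q 1 + q"
  proof -
    have "b * rr q 1 = rr q 1 + q / rr q 1 * rr q 1" unfolding b_def by (simp add: distrib_right)
    also have "q / rr q 1 * rr q 1 = q" using r1 by simp
    finally show ?thesis .
  qed
  ultimately have hb: "q \<le> b * rr q b" using r1 by simp
  have h0: "0 * rr q 0 \<le> q" using q by simp
  obtain D where D: "0 \<le> D" "D \<le> b" "D * rr q D = q"
    using IVT'[of "\<lambda>D. D * rr q D" 0 q b, OF h0 hb _ rr_cont[OF q]] b1 by auto
  then have "D \<noteq> 0" using q by auto
  with D show ?thesis by (intro exI[of _ D]) auto
qed

lemma Dstar_prop:
  assumes q: "q > 0"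
  shows "Dstar q > 0" "Dstar q * rr q (Dstar q) = q"
proof -
  have cond: "(D > 0 \<and> q - D * deriv (FGq q) D / FGq q D = 0) \<longleftrightarrow> (D > 0 \<and> D * rr q D = q)" for D
  proof -
    have "deriv (FGq q) D = H1 q D" by (rule DERIV_imp_deriv[OF dH[OF q]])
    then have "D * deriv (FGq q) D / FGq q D = D * rr q D" unfolding rr_def by simp
    then show ?thesis by linarith
  qed
  obtain D where D: "D > 0" "D * rr q D = q" using root_exists[OF q] by blast
  have uniq: "E = D" if "E > 0" "E * rr q E = q" for E
  proof (rule ccontr)
    assume "E \<noteq> D"
    then consider "E < D" | "D < E" by linarith
    then show False
    proof cases
      case 1 then show False using gg_mono[OF q, of E D] that D by simp
    next
      case 2 then show False using gg_mono[OF q, of D E] that D by simp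
    qed
  qed
  have "Dstar q = D" unfolding Dstar_def cond
    by (rule the_equality) (use D uniq in blast)+
  with D show "Dstar q > 0" "Dstar q * rr q (Dstar q) = q" by auto
qed

definition cc :: "real \<Rightarrow> real" where "cc q = Dstar q powr q / FGq q (Dstar q)"
definition ff :: "real \<Rightarrow> real \<Rightarrow> real" where "ff q A = cc q * FGq q A - A powr q"
definition f1 :: "real \<Rightarrow> real \<Rightarrow> real" where "f1 q A = cc q * H1 q A - q * A powr (q - 1)"
definition psi :: "real \<Rightarrow> real \<Rightarrow> real" where "psi q A = f1 q A * Gq q A - ff q A * G1 q A"
definition phi :: "real \<Rightarrow> real \<Rightarrow> real" where "phi q A = exp (-(A*A)/2) * psi q A"

lemma w_eq: "wfun q = (\<lambda>A. ff q A / Gq q A)"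
  unfolding wfun_def ff_def cc_def by (auto simp: fun_eq_iff)

lemma dff: assumes q: "q > 0" and A: "A > 0"
  shows "(ff q has_real_derivative f1 q A) (at A)"
  unfolding ff_def[abs_def] f1_def
  by (rule DERIV_diff[OF DERIV_cmult[OF dH[OF q]] has_real_derivative_powr[OF A]])

lemma df1: assumes q: "q > 0" and A: "A > 0"
  shows "(f1 q has_real_derivative cc q * (A * H1 q A + q * FGq q A) - q * ((q - 1) * A powr (q - 1 - 1))) (at A)"
  unfolding f1_def[abs_def]
  by (rule DERIV_diff[OF DERIV_cmult[OF dH1[OF q]] DERIV_cmult[OF has_real_derivative_powr[OF A]]])

lemma dw: assumes q: "q > 0" and A: "A > 0"
  shows "(wfun q has_real_derivative psi q A / (Gq q A * Gq q A)) (at A)"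
proof -
  have "Gq q A \<noteq> 0" using G_pos[OF q, of A] by simp
  from DERIV_divide[OF dff[OF q A] dG[OF q] this] show ?thesis
    unfolding w_eq psi_def by simp
qed

lemma dphi: assumes q: "q > 0" and A: "A > 0"
  shows "(phi q has_real_derivative exp (-(A*A)/2) * Gq q A * (q * A powr (q - 2) * (2*A*A - (q - 1)))) (at A)"
proof -
  have e: "((\<lambda>y. exp (-(y*y)/2)) has_real_derivative exp (-(A*A)/2) * (-A)) (at A)"
    by (auto intro!: derivative_eq_intros simp: field_simps)
  note dpsi = DERIV_diff[OF DERIV_mult'[OF df1[OF q A] dG[OF q]] DERIV_mult'[OF dff[OF q A] dG1[OF q]]]
  note d = DERIV_mult'[OF e dpsi]
  have p1: "A powr (q - 1) = A * A powr (q - 2)"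
  proof -
    have "A powr (q - 1) = A powr (1 + (q - 2))" by simp
    also have "\<dots> = A powr 1 * A powr (q - 2)" by (rule powr_add)
    finally show ?thesis using A by simp
  qed
  have p2: "A powr q = A * A * A powr (q - 2)"
  proof -
    have "A powr q = A powr (2 + (q - 2))" by simp
    also have "\<dots> = A powr 2 * A powr (q - 2)" by (rule powr_add)
    finally show ?thesis using A by (simp add: powr_numeral power2_eq_square)
  qed
  have p3: "A powr (q - 1 - 1) = A powr (q - 2)" by simp
  show ?thesis unfolding phi_def[abs_def] psi_def[abs_def]
    apply (rule DERIV_cong[OF d])
    unfolding psi_def ff_def f1_def p1 p2 p3
    by algebra
qed

lemma psi_D: assumes q: "q > 0" shows "psi q (Dstar q) = 0"
proof -
  define D where "D = Dstar q"
  have D: "D > 0" "D * rr q D = q" using Dstar_prop[OF q] unfolding D_def by auto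
  have Hp: "FGq q D > 0" using H_pos[OF q] .
  have "ff q D = 0" unfolding ff_def cc_def D_def[symmetric] using Hp by simp
  moreover have "f1 q D = 0"
  proof -
    have h1: "H1 q D = q * FGq q D / D" using D(2) D(1) Hp unfolding rr_def by (simp add: field_simps)
    have pd: "D powr q = D * D powr (q - 1)"
    proof -
      have "D powr q = D powr (1 + (q - 1))" by simp
      also have "\<dots> = D powr 1 * D powr (q - 1)" by (rule powr_add)
      finally show ?thesis using D by simp
    qed
    show ?thesis unfolding f1_def cc_def D_def[symmetric] h1 pd using Hp D(1) by (simp add: field_simps)
  qed
  ultimately show ?thesis unfolding psi_def D_def by simp
qed

lemma phi_cont: assumes q: "q > 0" and "0 < a" shows "continuous_on {a..b} (phi q)"
  by (rule continuous_at_imp_continuous_on) (use DERIV_isCont[OF dphi[OF q]] assms in auto)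

lemma phi_two:
  assumes q: "q > 0" and abc: "0 < a" "a < b" "b < c"
    and z: "phi q a = 0" "phi q b = 0" "phi q c = 0"
  shows False
proof -
  define s where "s = sqrt (max 0 ((q - 1)/2))"
  have s0: "s \<ge> 0" unfolding s_def by simp
  have ss: "s * s = max 0 ((q - 1)/2)" unfolding s_def by (simp add: real_sqrt_mult[symmetric])
  have sgn: "0 < exp (-(x*x)/2) * Gq q x * (q * x powr (q - 2))" if "x > 0" for x
    using that G_pos[OF q, of x] q by simp
  show False
  proof (cases "b \<le> s")
    case True
    have "phi q b < phi q a"
    proof (rule DERIV_neg_imp_decreasing_open[OF abc(2)])
      fix x assume x: "a < x" "x < b"
      then have "x * x < s * s" using abc s0 True by (intro mult_strict_mono) auto
      then have "2*x*x - (q - 1) < 0" using ss x abc by (auto simp: max_def split: if_splits)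
      then have "exp (-(x*x)/2) * Gq q x * (q * x powr (q - 2) * (2*x*x - (q - 1))) < 0"
        using sgn[of x] x abc by (simp add: mult_pos_neg mult.assoc[symmetric])
      then show "\<exists>y. DERIV (phi q) x :> y \<and> y < 0" using dphi[OF q, of x] x abc by auto
    qed (rule phi_cont[OF q abc(1)])
    then show False using z by simp
  next
    case False
    have "phi q b < phi q c"
    proof (rule DERIV_pos_imp_increasing_open[OF abc(3)])
      fix x assume x: "b < x" "x < c"
      then have "x * x > s * s" using abc s0 False by (intro mult_strict_mono) auto
      moreover have "x * x > 0" using x abc by simp
      ultimately have "2*x*x - (q - 1) > 0" using ss by (auto simp: max_def split: if_splits)
      then have "exp (-(x*x)/2) * Gq q x * (q * x powr (q - 2) * (2*x*x - (q - 1))) > 0"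
        using sgn[of x] x abc by (simp add: mult.assoc[symmetric])
      then show "\<exists>y. DERIV (phi q) x :> y \<and> y > 0" using dphi[OF q, of x] x abc by auto
    qed (rule phi_cont[OF q], use abc in linarith)
    then show False using z by simp
  qed
qed

lemma cc_pos: "q > 0 \<Longrightarrow> cc q > 0"
  unfolding cc_def using Dstar_prop(1)[of q] H_pos[of q] by simp

lemma ff_D: assumes q: "q > 0" shows "ff q (Dstar q) = 0"
  unfolding ff_def cc_def using H_pos[OF q, of "Dstar q"] by simp

lemma w0_pos: assumes q: "q > 0" shows "wfun q 0 > 0"
proof -
  have "ff q 0 = cc q * FGq q 0" unfolding ff_def by simp
  then have "ff q 0 > 0" using cc_pos[OF q] H_pos[OF q, of 0] by simp
  then show ?thesis unfolding w_eq using G_pos[OF q, of 0] by simp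
qed

lemma wD: assumes q: "q > 0" shows "wfun q (Dstar q) = 0"
  unfolding w_eq using ff_D[OF q] by simp

lemma w_cont: assumes q: "q > 0" shows "continuous_on {0..b} (wfun q)"
proof -
  have cH: "continuous_on {0..b} (FGq q)"
    by (rule continuous_at_imp_continuous_on) (use DERIV_isCont[OF dH[OF q]] in blast)
  have cG: "continuous_on {0..b} (Gq q)"
    by (rule continuous_at_imp_continuous_on) (use DERIV_isCont[OF dG[OF q]] in blast)
  have cP: "continuous_on {0..b} (\<lambda>A. A powr q)"
    by (rule continuous_on_powr') (use q in \<open>auto intro: continuous_on_id continuous_on_const\<close>)
  have "continuous_on {0..b} (\<lambda>A. (cc q * FGq q A - A powr q) / Gq q A)"
    by (intro continuous_on_divide continuous_on_diff continuous_on_mult continuous_on_const cH cG cP)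
       (use G_pos[OF q] in \<open>auto simp: less_imp_neq[symmetric]\<close>)
  then show ?thesis unfolding w_eq ff_def .
qed

lemma crit_max:
  assumes q: "q > 0" and m: "0 < m" and d: "0 < d"
    and lm: "\<forall>y. \<bar>m - y\<bar> < d \<longrightarrow> wfun q y \<le> wfun q m"
  shows "phi q m = 0"
proof -
  have "psi q m / (Gq q m * Gq q m) = 0"
    using DERIV_local_max[OF dw[OF q m] d lm] .
  then have "psi q m = 0" using G_pos[OF q, of m] by simp
  then show ?thesis unfolding phi_def by simp
qed

lemma crit_min:
  assumes q: "q > 0" and m: "0 < m" and d: "0 < d"
    and lm: "\<forall>y. \<bar>m - y\<bar> < d \<longrightarrow> wfun q m \<le> wfun q y"
  shows "phi q m = 0"
proof -
  have "psi q m / (Gq q m * Gq q m) = 0"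
    using DERIV_local_min[OF dw[OF q m] d lm] .
  then have "psi q m = 0" using G_pos[OF q, of m] by simp
  then show ?thesis unfolding phi_def by simp
qed

lemma max_unique:
  assumes q: "q > 0"
    and A1: "A1 \<in> {0..Dstar q}" "\<forall>B\<in>{0..Dstar q}. wfun q B \<le> wfun q A1"
    and A2: "A2 \<in> {0..Dstar q}" "\<forall>B\<in>{0..Dstar q}. wfun q B \<le> wfun q A2"
    and lt: "A1 < A2"
  shows False
proof -
  define D where "D = Dstar q"
  have D0: "D > 0" unfolding D_def using Dstar_prop[OF q] by simp
  have A1': "0 \<le> A1" "A1 \<le> D" using A1(1) unfolding D_def by auto
  have A2': "0 \<le> A2" "A2 \<le> D" using A2(1) unfolding D_def by auto
  have A2m: "\<And>B. 0 \<le> B \<Longrightarrow> B \<le> D \<Longrightarrow> wfun q B \<le> wfun q A2" using A2(2) unfolding D_def by auto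
  have A1m: "\<And>B. 0 \<le> B \<Longrightarrow> B \<le> D \<Longrightarrow> wfun q B \<le> wfun q A1" using A1(2) unfolding D_def by auto
  have eqM: "wfun q A1 = wfun q A2" using A1m[OF A2'] A2m[OF A1'] by linarith
  have "wfun q A2 \<ge> wfun q 0" using A2m[of 0] D0 by simp
  then have M0: "wfun q A2 > 0" using w0_pos[OF q] by simp
  have A2D: "A2 < D"
  proof (rule ccontr)
    assume "\<not> A2 < D"
    then have "A2 = D" using A2' by simp
    then show False using M0 wD[OF q] unfolding D_def by simp
  qed
  have A2p: "A2 > 0" using A1' lt by simp
  have z2: "phi q A2 = 0"
  proof (rule crit_max[OF q A2p, of "min A2 (D - A2)"])
    show "0 < min A2 (D - A2)" using A2p A2D by simp
    show "\<forall>y. \<bar>A2 - y\<bar> < min A2 (D - A2) \<longrightarrow> wfun q y \<le> wfun q A2"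
    proof (intro allI impI)
      fix y assume "\<bar>A2 - y\<bar> < min A2 (D - A2)"
      then have "0 \<le> y" "y \<le> D" by (simp_all add: abs_less_iff)
      then show "wfun q y \<le> wfun q A2" by (rule A2m)
    qed
  qed
  have cont: "continuous_on {A1..A2} (wfun q)"
    using continuous_on_subset[OF w_cont[OF q, of D], of "{A1..A2}"] A1' A2D by auto
  obtain m0 where m0: "m0 \<in> {A1..A2}" "\<forall>y\<in>{A1..A2}. wfun q m0 \<le> wfun q y"
    using continuous_attains_inf[OF compact_Icc _ cont] lt by auto
  obtain m where m: "A1 < m" "m < A2" "\<forall>y\<in>{A1..A2}. wfun q m \<le> wfun q y"
  proof (cases "A1 < m0 \<and> m0 < A2")
    case True then show ?thesis using that m0 by blast
  next
    case False
    then have "m0 = A1 \<or> m0 = A2" using m0(1) by auto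
    then have wm0: "wfun q m0 = wfun q A2" using eqM by auto
    have all: "wfun q y = wfun q A2" if "y \<in> {A1..A2}" for y
    proof -
      have "wfun q m0 \<le> wfun q y" using m0(2) that by blast
      moreover have "wfun q y \<le> wfun q A2" using that A1' A2' by (intro A2m) auto
      ultimately show ?thesis using wm0 by linarith
    qed
    show ?thesis
    proof (rule that[of "(A1 + A2)/2"])
      show "A1 < (A1 + A2)/2" "(A1 + A2)/2 < A2" using lt by simp_all
      have "(A1 + A2)/2 \<in> {A1..A2}" using lt by simp
      then show "\<forall>y\<in>{A1..A2}. wfun q ((A1 + A2)/2) \<le> wfun q y"
        using all by (metis order_refl)
    qed
  qed
  have mp: "m > 0" using m A1' by simp
  have zm: "phi q m = 0"
  proof (rule crit_min[OF q mp, of "min (m - A1) (A2 - m)"])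
    show "0 < min (m - A1) (A2 - m)" using m by simp
    show "\<forall>y. \<bar>m - y\<bar> < min (m - A1) (A2 - m) \<longrightarrow> wfun q m \<le> wfun q y"
    proof (intro allI impI)
      fix y assume "\<bar>m - y\<bar> < min (m - A1) (A2 - m)"
      then have "y \<in> {A1..A2}" by (simp add: abs_less_iff)
      then show "wfun q m \<le> wfun q y" using m(3) by blast
    qed
  qed
  have zD: "phi q D = 0" unfolding phi_def D_def using psi_D[OF q] by simp
  show False using phi_two[OF q mp m(2) A2D zm z2 zD] .
qed

lemma Astar_prop:
  assumes q: "q > 0"
  shows "Astar q \<in> {0..Dstar q}" "\<forall>B\<in>{0..Dstar q}. wfun q B \<le> wfun q (Astar q)"
proof -
  have D0: "Dstar q > 0" using Dstar_prop[OF q] by simp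
  obtain A where A: "A \<in> {0..Dstar q}" "\<forall>B\<in>{0..Dstar q}. wfun q B \<le> wfun q A"
    using continuous_attains_sup[of "{0..Dstar q}" "wfun q"] w_cont[OF q] D0 by auto
  have "Astar q = A" unfolding Astar_def
  proof (rule the_equality)
    show "A \<in> {0..Dstar q} \<and> (\<forall>B\<in>{0..Dstar q}. wfun q B \<le> wfun q A)" using A by blast
    fix A' assume A': "A' \<in> {0..Dstar q} \<and> (\<forall>B\<in>{0..Dstar q}. wfun q B \<le> wfun q A')"
    show "A' = A"
    proof (rule ccontr)
      assume "A' \<noteq> A"
      then consider "A' < A" | "A < A'" by linarith
      then show False
      proof cases
        case 1 then show False using max_unique[OF q _ _ A(1) A(2)] A' by blast
      next
        case 2 then show False using max_unique[OF q A(1) A(2)] A' by blast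
      qed
    qed
  qed
  with A show "Astar q \<in> {0..Dstar q}" "\<forall>B\<in>{0..Dstar q}. wfun q B \<le> wfun q (Astar q)" by auto
qed

theorem lemma5p3:
  fixes q t x :: real
  assumes "q > 0" and "0 \<le> t" and "t < 1"
  shows "Wstar q t x \<ge> hfun q t x"
proof -
  note q = assms(1)
  define s where "s = sqrt (1 - t)"
  define T where "T = (1 - t) powr (q / 2)"
  define D where "D = Dstar q"
  define A where "A = Astar q"
  define y where "y = \<bar>x\<bar> / s"
  have s0: "s > 0" unfolding s_def using assms by simp
  have T0: "T > 0" unfolding T_def using assms by simp
  have D0: "D > 0" unfolding D_def using Dstar_prop[OF q] by simp
  have Aprop: "A \<in> {0..D}" "\<forall>B\<in>{0..D}. wfun q B \<le> wfun q A"
    using Astar_prop[OF q] unfolding A_def D_def by auto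
  have "wfun q 0 \<le> wfun q A" using Aprop(2) D0 by simp
  then have wA: "wfun q A > 0" using w0_pos[OF q] by simp
  have y0: "y \<ge> 0" unfolding y_def using s0 by simp
  have Gy: "Gq q y > 0" using G_pos[OF q] .
  show ?thesis
  proof (cases "\<bar>x\<bar> > A * s")
    case False
    then show ?thesis unfolding Wstar_def A_def s_def by simp
  next
    case True
    then have W: "Wstar q t x = T * Gq q y * wfun q A"
      unfolding Wstar_def A_def s_def T_def y_def by simp
    show ?thesis
    proof (cases "\<bar>x\<bar> < D * s")
      case False
      then have "hfun q t x = 0" unfolding hfun_def D_def s_def by simp
      moreover have "T * Gq q y * wfun q A \<ge> 0" using T0 Gy wA by simp
      ultimately show ?thesis using W by simp
    next
      case lt: True
      have yD: "y \<le> D" unfolding y_def using lt s0 by (simp add: divide_le_eq mult.commute)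
      have Hx: "FGq q (x / s) = FGq q y"
      proof (cases "x \<ge> 0")
        case True then show ?thesis unfolding y_def by simp
      next
        case False
        then have "x / s = - y" unfolding y_def by simp
        then show ?thesis using H_even by simp
      qed
      have px: "\<bar>x\<bar> powr q = T * y powr q"
      proof -
        have "\<bar>x\<bar> = s * y" unfolding y_def using s0 by simp
        then have "\<bar>x\<bar> powr q = s powr q * y powr q" using s0 y0 by (simp add: powr_mult)
        moreover have "s powr q = T"
        proof -
          have "s = (1 - t) powr (1/2)" unfolding s_def using assms by (simp add: powr_half_sqrt)
          then have "s powr q = (1 - t) powr (1/2 * q)" by (simp add: powr_powr)
          then show ?thesis unfolding T_def by simp
        qed
        ultimately show ?thesis by simp
      qed
      have "hfun q t x = T * D powr q * FGq q y / FGq q D - T * y powr q"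
        unfolding hfun_def Ubar_def using lt Hx px unfolding D_def s_def T_def by simp
      also have "\<dots> = T * ff q y" unfolding ff_def cc_def D_def by (simp add: algebra_simps)
      also have "\<dots> = T * Gq q y * wfun q y" unfolding w_eq using Gy by simp
      also have "\<dots> \<le> T * Gq q y * wfun q A"
        using Aprop(2) y0 yD T0 Gy by (intro mult_left_mono) auto
      finally show ?thesis using W by simp
    qed
  qed
qed

end
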